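(* Let $G$ be an undirected graph with at least one edge. For every integer $k\ge 1$, $$\Big(1-\frac1k\Big)\,\mathsf{OPT}\;\le\;\mathsf{OPT}_k\;\le\;1-\frac1k .$$
   Context: Let $G=(V,E)$ be a finite simple undirected graph with $n=|V|$ nodes and $m=|E|\ge1$ edges, let $d_v$ be the degree of $v$, and let $a_{u,v}=1$ if $\{u,v\}\in E$ and $a_{u,v}=0$ otherwise. For $C\subseteq V$ the modularity of $C$ is $\mathsf M(C)=\frac{1}{2m}\sum_{u\in C}\sum_{v\in C}\big(a_{u,v}-\frac{d_ud_v}{2m}\big)$, the sum ranging over all ordered pairs $(u,v)$ of nodes of $C$, including $u=v$. A clustering is a partition $\mathcal S$ of $V$ into nonempty sets (clusters); its modularity is $\mathsf M(\mathcal S)=\sum_{C\in\mathcal S}\mathsf M(C)$. $\mathsf{OPT}$ is the maximum of $\mathsf M(\mathcal S)$ over all clusterings, and $\mathsf{OPT}_k$ is the maximum of $\mathsf M(\mathcal S)$ over clusterings with at most $k$ clusters. *)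

theory Defs
  imports Complex_Main
begin

definition simple_graph :: "'a set \<Rightarrow> 'a set set \<Rightarrow> bool" where
  "simple_graph V E \<longleftrightarrow> finite V \<and> (\<forall>e\<in>E. e \<subseteq> V \<and> card e = 2)"

definition adj :: "'a set set \<Rightarrow> 'a \<Rightarrow> 'a \<Rightarrow> real" where
  "adj E u v = (if {u, v} \<in> E then 1 else 0)"

definition degree :: "'a set \<Rightarrow> 'a set set \<Rightarrow> 'a \<Rightarrow> real" where
  "degree V E v = real (card {u \<in> V. {u, v} \<in> E})"

definition num_edges :: "'a set set \<Rightarrow> real" where
  "num_edges E = real (card E)"

definition modularity_cluster :: "'a set \<Rightarrow> 'a set set \<Rightarrow> 'a set \<Rightarrow> real" where
  "modularity_cluster V E C =
     (1 / (2 * num_edges E)) *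
     (\<Sum>u\<in>C. \<Sum>v\<in>C. adj E u v - degree V E u * degree V E v / (2 * num_edges E))"

definition clustering :: "'a set \<Rightarrow> 'a set set \<Rightarrow> bool" where
  "clustering V S \<longleftrightarrow> \<Union>S = V \<and> (\<forall>C\<in>S. C \<noteq> {}) \<and>
     (\<forall>C\<in>S. \<forall>D\<in>S. C \<noteq> D \<longrightarrow> C \<inter> D = {})"

definition modularity :: "'a set \<Rightarrow> 'a set set \<Rightarrow> 'a set set \<Rightarrow> real" where
  "modularity V E S = (\<Sum>C\<in>S. modularity_cluster V E C)"

definition OPT :: "'a set \<Rightarrow> 'a set set \<Rightarrow> real" where
  "OPT V E = Max (modularity V E ` {S. clustering V S})"

definition OPT_k :: "'a set \<Rightarrow> 'a set set \<Rightarrow> nat \<Rightarrow> real" where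
  "OPT_k V E k = Max (modularity V E ` {S. clustering V S \<and> card S \<le> k})"

end

theory Submission
  imports Defs
begin

definition ww :: "'a set \<Rightarrow> 'a set set \<Rightarrow> 'a \<Rightarrow> 'a \<Rightarrow> real" where
  "ww V E u v = (adj E u v - degree V E u * degree V E v / (2 * num_edges E)) / (2 * num_edges E)"

lemma mc_ww: "modularity_cluster V E C = (\<Sum>u\<in>C. \<Sum>v\<in>C. ww V E u v)"
  unfolding modularity_cluster_def ww_def
  by (simp add: sum_distrib_left sum_divide_distrib)

lemma clustering_finite:
  assumes "clustering V S" "finite V"
  shows "finite S" "\<And>C. C \<in> S \<Longrightarrow> C \<subseteq> V" "\<And>C. C \<in> S \<Longrightarrow> finite C"
proof -
  show sub: "\<And>C. C \<in> S \<Longrightarrow> C \<subseteq> V" using assms unfolding clustering_def by auto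
  then have "S \<subseteq> Pow V" by auto
  then show "finite S" using assms(2) by (meson finite_Pow_iff rev_finite_subset)
  show "\<And>C. C \<in> S \<Longrightarrow> finite C" using sub assms(2) rev_finite_subset by blast
qed

lemma union_sum:
  assumes "clustering V S" "finite V"
  shows "(\<Sum>C\<in>S. \<Sum>u\<in>C. f u) = (\<Sum>u\<in>V. f u)"
proof -
  have "(\<Sum>u\<in>\<Union>S. f u) = (\<Sum>C\<in>S. \<Sum>u\<in>C. f u)"
    using sum.Union_disjoint[of S f] clustering_finite[OF assms] assms(1)
    unfolding clustering_def by auto
  then show ?thesis using assms(1) unfolding clustering_def by simp
qed

lemma deg_card:
  assumes "simple_graph V E"
  shows "degree V E u = real (card {e\<in>E. u \<in> e})"
proof -
  have "bij_betw (\<lambda>v. {v, u}) {v\<in>V. {v, u} \<in> E} {e\<in>E. u \<in> e}"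
  proof (rule bij_betwI')
    fix x y assume "x \<in> {v\<in>V. {v, u} \<in> E}" "y \<in> {v\<in>V. {v, u} \<in> E}"
    show "({x, u} = {y, u}) = (x = y)" by (metis doubleton_eq_iff)
  next
    fix x assume "x \<in> {v\<in>V. {v, u} \<in> E}" then show "{x, u} \<in> {e\<in>E. u \<in> e}" by auto
  next
    fix e assume e: "e \<in> {e\<in>E. u \<in> e}"
    then have "e \<subseteq> V" "card e = 2" using assms unfolding simple_graph_def by auto
    then obtain a b where ab: "e = {a, b}" "a \<noteq> b" by (meson card_2_iff)
    show "\<exists>x\<in>{v\<in>V. {v, u} \<in> E}. e = {x, u}"
    proof (cases "u = a")
      case True then show ?thesis using ab e \<open>e \<subseteq> V\<close> by (intro bexI[of _ b]) (auto simp: insert_commute)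
    next
      case False then have "u = b" using ab e by auto
      then show ?thesis using ab e \<open>e \<subseteq> V\<close> by (intro bexI[of _ a]) auto
    qed
  qed
  then show ?thesis unfolding degree_def by (simp add: bij_betw_same_card)
qed

lemma graph_basic:
  assumes "simple_graph V E" "E \<noteq> {}"
  shows "finite E" "num_edges E > 0" "V \<noteq> {}" "finite V"
proof -
  show fV: "finite V" using assms unfolding simple_graph_def by auto
  have "E \<subseteq> Pow V" using assms unfolding simple_graph_def by auto
  then show fE: "finite E" using fV by (meson finite_Pow_iff rev_finite_subset)
  then show "num_edges E > 0" using assms(2) unfolding num_edges_def by (simp add: card_gt_0_iff)
  obtain e where "e \<in> E" using assms(2) by auto
  then have "e \<subseteq> V" "card e = 2" using assms unfolding simple_graph_def by auto
  then show "V \<noteq> {}" by auto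
qed

lemma handshake:
  assumes "simple_graph V E" "E \<noteq> {}"
  shows "(\<Sum>u\<in>V. degree V E u) = 2 * num_edges E"
proof -
  note b = graph_basic[OF assms]
  have "(\<Sum>u\<in>V. degree V E u) = (\<Sum>u\<in>V. \<Sum>e\<in>E. if u \<in> e then 1 else 0)"
    using deg_card[OF assms(1)] b by (simp add: sum.If_cases Int_def)
  also have "\<dots> = (\<Sum>e\<in>E. \<Sum>u\<in>V. if u \<in> e then 1 else 0)" by (rule sum.swap)
  also have "\<dots> = (\<Sum>e\<in>E. 2)"
  proof (rule sum.cong)
    fix e assume "e \<in> E"
    then have "e \<subseteq> V" "card e = 2" using assms unfolding simple_graph_def by auto
    then have "V \<inter> e = e" by auto
    then show "(\<Sum>u\<in>V. if u \<in> e then 1 else 0) = (2::real)"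
      using \<open>card e = 2\<close> b by (simp add: sum.If_cases)
  qed simp
  finally show ?thesis unfolding num_edges_def by simp
qed

lemma adj_row:
  assumes "finite V"
  shows "(\<Sum>v\<in>V. adj E u v) = degree V E u"
proof -
  have "(\<Sum>v\<in>V. adj E u v) = real (card {v\<in>V. {u,v} \<in> E})"
    unfolding adj_def using assms by (simp add: sum.If_cases Int_def)
  also have "{v\<in>V. {u,v} \<in> E} = {v\<in>V. {v,u} \<in> E}" by (auto simp: insert_commute)
  finally show ?thesis unfolding degree_def .
qed


lemma ww_split:
  assumes "simple_graph V E" "E \<noteq> {}"
  shows "ww V E u v = adj E u v / (2 * num_edges E) - (degree V E u / (2 * num_edges E)) * (degree V E v / (2 * num_edges E))"
  using graph_basic[OF assms] unfolding ww_def by (simp add: field_simps)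

lemma block_sum:
  assumes "simple_graph V E" "E \<noteq> {}"
  shows "(\<Sum>u\<in>C. \<Sum>v\<in>C. ww V E u v) = (\<Sum>u\<in>C. \<Sum>v\<in>C. adj E u v) / (2 * num_edges E)
     - ((\<Sum>u\<in>C. degree V E u) / (2 * num_edges E))\<^sup>2"
  unfolding ww_split[OF assms] power2_eq_square
  by (simp add: sum_subtractf sum_divide_distrib sum_distrib_left sum_distrib_right; simp add: mult_ac)

lemma ww_total:
  assumes "simple_graph V E" "E \<noteq> {}"
  shows "(\<Sum>u\<in>V. \<Sum>v\<in>V. ww V E u v) = 0"
proof -
  note b = graph_basic[OF assms]
  have "(\<Sum>u\<in>V. \<Sum>v\<in>V. adj E u v) = 2 * num_edges E"
    using adj_row[OF b(4)] handshake[OF assms] by simp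
  then show ?thesis unfolding block_sum[OF assms] handshake[OF assms] using b by simp
qed

lemma mod_upper:
  assumes "simple_graph V E" "E \<noteq> {}" "clustering V S" "card S \<le> k"
  shows "modularity V E S \<le> 1 - 1 / real k"
proof -
  note b = graph_basic[OF assms(1,2)]
  note cf = clustering_finite[OF assms(3) b(4)]
  define m2 where "m2 = 2 * num_edges E"
  have m2: "m2 > 0" using b unfolding m2_def by simp
  define A where "A C = (\<Sum>u\<in>C. \<Sum>v\<in>C. adj E u v)" for C
  define x where "x C = (\<Sum>u\<in>C. degree V E u) / m2" for C
  have mod: "modularity V E S = (\<Sum>C\<in>S. A C) / m2 - (\<Sum>C\<in>S. (x C)\<^sup>2)"
    unfolding modularity_def mc_ww block_sum[OF assms(1,2)] A_def x_def m2_def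
    by (simp add: sum_subtractf sum_divide_distrib)
  have "(\<Sum>C\<in>S. A C) \<le> (\<Sum>C\<in>S. \<Sum>u\<in>C. \<Sum>v\<in>V. adj E u v)"
    unfolding A_def
  proof (rule sum_mono, rule sum_mono, rule sum_mono2)
    fix C u assume "C \<in> S" "u \<in> C"
    show "finite V" using b by simp
    show "C \<subseteq> V" using cf \<open>C \<in> S\<close> by simp
    show "\<And>v. v \<in> V - C \<Longrightarrow> 0 \<le> adj E u v" unfolding adj_def by simp
  qed
  also have "\<dots> = (\<Sum>u\<in>V. \<Sum>v\<in>V. adj E u v)" by (rule union_sum[OF assms(3) b(4)])
  also have "\<dots> = m2" using adj_row[OF b(4)] handshake[OF assms(1,2)] m2_def by simp
  finally have A: "(\<Sum>C\<in>S. A C) / m2 \<le> 1" using m2 by simp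
  have sx: "(\<Sum>C\<in>S. x C) = 1"
    unfolding x_def sum_divide_distrib[symmetric] union_sum[OF assms(3) b(4)]
    using handshake[OF assms(1,2)] m2 m2_def by simp
  have "S \<noteq> {}" using assms(3) b(3) unfolding clustering_def by auto
  then have n: "card S > 0" using cf(1) by (simp add: card_gt_0_iff)
  define n where "n = real (card S)"
  have npos: "n > 0" using n n_def by simp
  have "0 \<le> (\<Sum>C\<in>S. (x C - 1 / n)\<^sup>2)" by (simp add: sum_nonneg)
  also have "\<dots> = (\<Sum>C\<in>S. (x C)\<^sup>2) - 2 / n * (\<Sum>C\<in>S. x C) + n * (1/n)\<^sup>2"
    by (simp add: power2_diff sum_subtractf sum.distrib sum_distrib_left n_def algebra_simps; simp add: sum_divide_distrib[symmetric] sum_distrib_right[symmetric])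
  also have "\<dots> = (\<Sum>C\<in>S. (x C)\<^sup>2) - 1 / n"
    using sx npos by (simp add: power2_eq_square)
  finally have "(\<Sum>C\<in>S. (x C)\<^sup>2) \<ge> 1 / n" by simp
  moreover have "1 / n \<ge> 1 / real k" using npos assms(4) n_def
    by (simp add: frac_le)
  ultimately show ?thesis using mod A by linarith
qed


definition part :: "'a set \<Rightarrow> ('a \<Rightarrow> 'b) \<Rightarrow> 'a set set" where
  "part V h = (\<lambda>i. {u\<in>V. h u = i}) ` (h ` V)"

lemma part_clustering: "clustering V (part V h)"
  unfolding clustering_def part_def by auto

lemma part_card: "finite V \<Longrightarrow> card (part V h) \<le> card (h ` V)"
  unfolding part_def by (rule card_image_le) simp

lemma part_mod:
  assumes "finite V"
  shows "modularity V E (part V h) = (\<Sum>u\<in>V. \<Sum>v\<in>V. if h u = h v then ww V E u v else 0)"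
proof -
  have "modularity V E (part V h) = (\<Sum>B\<in>part V h. \<Sum>u\<in>B. \<Sum>v\<in>V. if h u = h v then ww V E u v else 0)"
    unfolding modularity_def mc_ww
  proof (rule sum.cong[OF refl], rule sum.cong[OF refl])
    fix B u assume B: "B \<in> part V h" and u: "u \<in> B"
    then have "B = {v\<in>V. h u = h v}" unfolding part_def by auto
    then show "(\<Sum>v\<in>B. ww V E u v) = (\<Sum>v\<in>V. if h u = h v then ww V E u v else 0)"
      using assms by (simp add: sum.inter_filter)
  qed
  also have "\<dots> = (\<Sum>u\<in>V. \<Sum>v\<in>V. if h u = h v then ww V E u v else 0)"
    by (rule union_sum[OF part_clustering assms])
  finally show ?thesis .
qed

lemma greedy:
  fixes x :: "'b \<Rightarrow> 'b \<Rightarrow> real" and k :: nat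
  assumes "finite I" "k \<ge> 1"
  shows "\<exists>g. (\<forall>i. g i < k) \<and>
    (1 - 1 / real k) * (\<Sum>i\<in>I. x i i) + (1 / real k) * (\<Sum>i\<in>I. \<Sum>j\<in>I. x i j)
      \<le> (\<Sum>i\<in>I. \<Sum>j\<in>I. if g i = g j then x i j else 0)"
  using assms(1)
proof (induction I rule: finite_induct)
  case empty
  show ?case using assms(2) by (intro exI[of _ "\<lambda>_. 0"]) auto
next
  case (insert a F)
  then obtain g where gk: "\<forall>i. g i < k" and IH:
    "(1 - 1 / real k) * (\<Sum>i\<in>F. x i i) + (1 / real k) * (\<Sum>i\<in>F. \<Sum>j\<in>F. x i j)
      \<le> (\<Sum>i\<in>F. \<Sum>j\<in>F. if g i = g j then x i j else 0)" by blast
  define y where "y j = x a j + x j a" for j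
  have "\<exists>c<k. (1 / real k) * (\<Sum>j\<in>F. y j) \<le> (\<Sum>j\<in>{j\<in>F. g j = c}. y j)"
  proof (rule ccontr)
    assume "\<not> ?thesis"
    then have lt: "\<And>c. c \<in> {..<k} \<Longrightarrow> (\<Sum>j\<in>{j\<in>F. g j = c}. y j) < (1 / real k) * (\<Sum>j\<in>F. y j)"
      by auto
    have "(\<Sum>c\<in>{..<k}. \<Sum>j\<in>{j\<in>F. g j = c}. y j) < (\<Sum>c\<in>{..<k}. (1 / real k) * (\<Sum>j\<in>F. y j))"
      by (rule sum_strict_mono[OF _ _ lt]) (use assms(2) in \<open>auto simp: lessThan_empty_iff\<close>)
    also have "\<dots> = (\<Sum>j\<in>F. y j)" using assms(2) by simp
    also have "\<dots> = (\<Sum>c\<in>{..<k}. \<Sum>j\<in>{j\<in>F. g j = c}. y j)"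
      by (rule sum.group[symmetric]) (use insert gk in auto)
    finally show False by simp
  qed
  then obtain c where ck: "c < k" and cbest: "(1 / real k) * (\<Sum>j\<in>F. y j) \<le> (\<Sum>j\<in>{j\<in>F. g j = c}. y j)"
    by blast
  define g' where "g' = g(a := c)"
  have g'F: "\<And>j. j \<in> F \<Longrightarrow> g' j = g j" using insert(2) unfolding g'_def by auto
  have g'a: "g' a = c" unfolding g'_def by simp
  have new: "(\<Sum>i\<in>insert a F. \<Sum>j\<in>insert a F. if g' i = g' j then x i j else 0)
     = x a a + (\<Sum>j\<in>{j\<in>F. g j = c}. y j) + (\<Sum>i\<in>F. \<Sum>j\<in>F. if g i = g j then x i j else 0)"
  proof -
    have h1: "(\<Sum>i\<in>insert a F. \<Sum>j\<in>insert a F. if g' i = g' j then x i j else 0)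
      = x a a + (\<Sum>j\<in>F. if c = g j then x a j else 0) + (\<Sum>i\<in>F. if g i = c then x i a else 0)
        + (\<Sum>i\<in>F. \<Sum>j\<in>F. if g i = g j then x i j else 0)"
      using insert(1,2) g'F g'a by (simp add: sum.distrib algebra_simps cong: sum.cong)
    have h2: "(\<Sum>j\<in>F. if c = g j then x a j else 0) + (\<Sum>i\<in>F. if g i = c then x i a else 0)
        = (\<Sum>j\<in>{j\<in>F. g j = c}. y j)"
    proof -
      have "(\<Sum>j\<in>{j\<in>F. g j = c}. y j) = (\<Sum>j\<in>F. if g j = c then y j else 0)"
        by (simp add: sum.inter_filter insert(1))
      also have "\<dots> = (\<Sum>j\<in>F. (if c = g j then x a j else 0) + (if g j = c then x j a else 0))"
        by (rule sum.cong) (auto simp: y_def)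
      also have "\<dots> = (\<Sum>j\<in>F. if c = g j then x a j else 0) + (\<Sum>i\<in>F. if g i = c then x i a else 0)"
        by (simp add: sum.distrib)
      finally show ?thesis by simp
    qed
    show ?thesis using h1 h2 by simp
  qed
  have rhs: "(1 - 1 / real k) * (\<Sum>i\<in>insert a F. x i i) + (1 / real k) * (\<Sum>i\<in>insert a F. \<Sum>j\<in>insert a F. x i j)
     = x a a + (1 / real k) * (\<Sum>j\<in>F. y j) +
       ((1 - 1 / real k) * (\<Sum>i\<in>F. x i i) + (1 / real k) * (\<Sum>i\<in>F. \<Sum>j\<in>F. x i j))"
    using insert(1,2) unfolding y_def by (simp add: sum.distrib algebra_simps)
  show ?case
    by (rule exI[of _ g']) (use gk ck IH cbest new rhs in \<open>auto simp: g'_def\<close>)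
qed


lemma block_transfer:
  fixes F :: "'a set \<Rightarrow> 'a set \<Rightarrow> real"
  assumes "clustering V S" "finite V" "\<And>C u. C \<in> S \<Longrightarrow> u \<in> C \<Longrightarrow> cl u = C"
  shows "(\<Sum>C\<in>S. \<Sum>D\<in>S. F C D * (\<Sum>u\<in>C. \<Sum>v\<in>D. f u v)) = (\<Sum>u\<in>V. \<Sum>v\<in>V. F (cl u) (cl v) * f u v)"
proof -
  have "(\<Sum>C\<in>S. \<Sum>D\<in>S. F C D * (\<Sum>u\<in>C. \<Sum>v\<in>D. f u v)) = (\<Sum>C\<in>S. \<Sum>D\<in>S. \<Sum>u\<in>C. \<Sum>v\<in>D. F (cl u) (cl v) * f u v)"
    using assms(3) by (simp add: sum_distrib_left)
  also have "\<dots> = (\<Sum>C\<in>S. \<Sum>u\<in>C. \<Sum>D\<in>S. \<Sum>v\<in>D. F (cl u) (cl v) * f u v)"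
    by (rule sum.cong[OF refl], rule sum.swap)
  also have "\<dots> = (\<Sum>C\<in>S. \<Sum>u\<in>C. \<Sum>v\<in>V. F (cl u) (cl v) * f u v)"
    by (simp add: union_sum[OF assms(1,2)])
  also have "\<dots> = (\<Sum>u\<in>V. \<Sum>v\<in>V. F (cl u) (cl v) * f u v)"
    by (rule union_sum[OF assms(1,2)])
  finally show ?thesis .
qed

theorem lemma1:
  fixes V :: "'a set" and E :: "'a set set" and k :: nat
  assumes "simple_graph V E" and "E \<noteq> {}" and "k \<ge> 1"
  shows "(1 - 1 / real k) * OPT V E \<le> OPT_k V E k \<and> OPT_k V E k \<le> 1 - 1 / real k"
proof -
  note b = graph_basic[OF assms(1,2)]
  have cl_fin: "finite {S. clustering V S}"
  proof (rule finite_subset[of _ "Pow (Pow V)"])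
    show "{S. clustering V S} \<subseteq> Pow (Pow V)" unfolding clustering_def by auto
  qed (use b in simp)
  have V1: "clustering V {V}" using b unfolding clustering_def by auto
  have fink: "finite {S. clustering V S \<and> card S \<le> k}" by (rule finite_subset[OF _ cl_fin]) auto
  have nek: "{V} \<in> {S. clustering V S \<and> card S \<le> k}" using V1 assms(3) by simp
  have up: "OPT_k V E k \<le> 1 - 1 / real k"
  proof -
    have "OPT_k V E k \<in> modularity V E ` {S. clustering V S \<and> card S \<le> k}"
      unfolding OPT_k_def by (rule Max_in) (use fink nek in auto)
    then obtain S where "clustering V S" "card S \<le> k" "OPT_k V E k = modularity V E S" by auto
    then show ?thesis using mod_upper[OF assms(1,2)] by simp
  qed
  have "OPT V E \<in> modularity V E ` {S. clustering V S}"
    unfolding OPT_def by (rule Max_in) (use cl_fin V1 in auto)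
  then obtain S where S: "clustering V S" and optS: "OPT V E = modularity V E S" by auto
  define cl where "cl u = (SOME C. C \<in> S \<and> u \<in> C)" for u
  have clp: "cl u = C" if "C \<in> S" "u \<in> C" for C u
  proof -
    have "\<exists>C. C \<in> S \<and> u \<in> C" using that by blast
    then have "cl u \<in> S \<and> u \<in> cl u" unfolding cl_def by (rule someI_ex)
    then show ?thesis using that S unfolding clustering_def by blast
  qed
  note cf = clustering_finite[OF S b(4)]
  define x where "x C D = (\<Sum>u\<in>C. \<Sum>v\<in>D. ww V E u v)" for C D
  obtain g where gk: "\<forall>i. g i < k" and gb:
    "(1 - 1 / real k) * (\<Sum>i\<in>S. x i i) + (1 / real k) * (\<Sum>i\<in>S. \<Sum>j\<in>S. x i j)
      \<le> (\<Sum>i\<in>S. \<Sum>j\<in>S. if g i = g j then x i j else 0)"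
    using greedy[OF cf(1) assms(3)] by blast
  have d: "(\<Sum>i\<in>S. x i i) = OPT V E" unfolding optS modularity_def mc_ww x_def ..
  have t: "(\<Sum>i\<in>S. \<Sum>j\<in>S. x i j) = 0"
    using block_transfer[OF S b(4) clp, where F="\<lambda>_ _. 1" and f="ww V E"] ww_total[OF assms(1,2)]
    unfolding x_def by simp
  have "(\<Sum>i\<in>S. \<Sum>j\<in>S. if g i = g j then x i j else 0)
      = (\<Sum>i\<in>S. \<Sum>j\<in>S. (if g i = g j then 1 else 0) * x i j)"
    by (intro sum.cong refl) simp
  also have "\<dots> = (\<Sum>u\<in>V. \<Sum>v\<in>V. (if g (cl u) = g (cl v) then 1 else 0) * ww V E u v)"
    unfolding x_def by (rule block_transfer[OF S b(4) clp])
  also have "\<dots> = modularity V E (part V (g \<circ> cl))"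
    unfolding part_mod[OF b(4)] by (intro sum.cong refl) simp
  finally have T: "(1 - 1 / real k) * OPT V E \<le> modularity V E (part V (g \<circ> cl))"
    using gb d t by simp
  have "card (part V (g \<circ> cl)) \<le> card ((g \<circ> cl) ` V)" by (rule part_card[OF b(4)])
  also have "\<dots> \<le> card {..<k}" by (rule card_mono) (use gk in auto)
  finally have "part V (g \<circ> cl) \<in> {S. clustering V S \<and> card S \<le> k}"
    using part_clustering by auto
  then have "modularity V E (part V (g \<circ> cl)) \<le> OPT_k V E k"
    unfolding OPT_k_def by (rule Max_ge[OF finite_imageI[OF fink] imageI])
  then show ?thesis using T up by simp
qed

end
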